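(* Assume in addition that $\lambda_A>0$ (the dataset need not be balanced). Let $\alpha=\lambda_A/32$ and $M=32/\lambda_A^2$ (assumed to be an integer). Then the iterates of TD-SVRG (Algorithm 1) satisfy, for every $m\ge0$, $$\mathbb E\big[\|\tilde\theta_m-\theta^*\|^2\big]\le\left(\tfrac57\right)^m\|\tilde\theta_0-\theta^*\|^2.$$
   Context: Finite-sample setting. Let $\mathcal S$ be a finite state space, $\phi:\mathcal S\to\mathbb R^d$ a feature map with $\|\phi(s)\|_2\le 1$ for all $s$, $r:\mathcal S\times\mathcal S\to\mathbb R$ a reward function and $\gamma\in[0,1)$. For a pair of states $(s,s')$ and $\theta\in\mathbb R^d$ let $g_{s,s'}(\theta)=(r(s,s')+\gamma\phi(s')^T\theta-\phi(s)^T\theta)\phi(s)$. A dataset is a state trajectory $s_1,\dots,s_{N+1}$, giving the $N$ pairs $(s_t,s_{t+1})$, $t=1,\dots,N$. Let $A_d=\frac1N\sum_{t=1}^N\phi(s_t)(\phi(s_t)-\gamma\phi(s_{t+1}))^T$ and $b_d=\frac1N\sum_{t=1}^N r(s_t,s_{t+1})\phi(s_t)$, so that $\bar g(\theta):=\frac1N\sum_{t=1}^N g_{s_t,s_{t+1}}(\theta)=-A_d\theta+b_d$. Assume $A_d$ is nonsingular and let $\theta^*=A_d^{-1}b_d$. Let $\lambda_A$ denote the minimum eigenvalue of $(A_d+A_d^T)/2$. Algorithm 1 (TD-SVRG): given $\alpha>0$, an integer $M\ge1$ and an initial $\tilde\theta_0\in\mathbb R^d$, for epochs $m=1,2,\dots$: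 set $\tilde\theta=\tilde\theta_{m-1}$, compute $\bar g(\tilde\theta)$, set $\theta_0=\tilde\theta$; for $t=1,\dots,M$ draw an index $i_t$ uniformly from $\{1,\dots,N\}$, independently of everything else, put $(s,s')=(s_{i_t},s_{i_t+1})$, $v_t=g_{s,s'}(\theta_{t-1})-g_{s,s'}(\tilde\theta)+\bar g(\tilde\theta)$ and $\theta_t=\theta_{t-1}+\alpha v_t$; finally set $\tilde\theta_m=\theta_{t'}$ where $t'$ is drawn uniformly from $\{0,\dots,M-1\}$ independently of everything else. *)

theory Defs
  imports "HOL-Analysis.Analysis" "HOL-Probability.Probability"
begin

definition tdg :: "('s \<Rightarrow> 's \<Rightarrow> real) \<Rightarrow> real \<Rightarrow> ('s \<Rightarrow> real^'d) \<Rightarrow> 's \<Rightarrow> 's \<Rightarrow> real^'d \<Rightarrow> real^'d" where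
  "tdg r \<gamma> \<phi> s s' \<theta> = (r s s' + \<gamma> * (\<phi> s' \<bullet> \<theta>) - \<phi> s \<bullet> \<theta>) *\<^sub>R \<phi> s"

definition gbar :: "('s \<Rightarrow> 's \<Rightarrow> real) \<Rightarrow> real \<Rightarrow> ('s \<Rightarrow> real^'d) \<Rightarrow> (nat \<Rightarrow> 's) \<Rightarrow> nat \<Rightarrow> real^'d \<Rightarrow> real^'d" where
  "gbar r \<gamma> \<phi> traj N \<theta> = (1 / real N) *\<^sub>R (\<Sum>t=1..N. tdg r \<gamma> \<phi> (traj t) (traj (Suc t)) \<theta>)"

definition outer :: "real^'d \<Rightarrow> real^'d \<Rightarrow> real^'d^'d" where
  "outer u v = (\<chi> i j. u $ i * v $ j)"

definition A_d :: "real \<Rightarrow> ('s \<Rightarrow> real^'d) \<Rightarrow> (nat \<Rightarrow> 's) \<Rightarrow> nat \<Rightarrow> real^'d^'d" where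
  "A_d \<gamma> \<phi> traj N = (1 / real N) *\<^sub>R
     (\<Sum>t=1..N. outer (\<phi> (traj t)) (\<phi> (traj t) - \<gamma> *\<^sub>R \<phi> (traj (Suc t))))"

definition b_d :: "('s \<Rightarrow> 's \<Rightarrow> real) \<Rightarrow> ('s \<Rightarrow> real^'d) \<Rightarrow> (nat \<Rightarrow> 's) \<Rightarrow> nat \<Rightarrow> real^'d" where
  "b_d r \<phi> traj N = (1 / real N) *\<^sub>R (\<Sum>t=1..N. r (traj t) (traj (Suc t)) *\<^sub>R \<phi> (traj t))"

definition min_eig :: "real^'d^'d \<Rightarrow> real" where
  "min_eig S = Min {c. \<exists>v. v \<noteq> 0 \<and> S *v v = c *\<^sub>R v}"

definition svrg_step :: "('s \<Rightarrow> 's \<Rightarrow> real) \<Rightarrow> real \<Rightarrow> ('s \<Rightarrow> real^'d) \<Rightarrow> (nat \<Rightarrow> 's) \<Rightarrow> nat \<Rightarrow> real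
     \<Rightarrow> real^'d \<Rightarrow> real^'d \<Rightarrow> nat \<Rightarrow> real^'d" where
  "svrg_step r \<gamma> \<phi> traj N \<alpha> \<theta>t \<theta> i =
     \<theta> + \<alpha> *\<^sub>R (tdg r \<gamma> \<phi> (traj i) (traj (Suc i)) \<theta> - tdg r \<gamma> \<phi> (traj i) (traj (Suc i)) \<theta>t
                 + gbar r \<gamma> \<phi> traj N \<theta>t)"

primrec inner_dist :: "('s \<Rightarrow> 's \<Rightarrow> real) \<Rightarrow> real \<Rightarrow> ('s \<Rightarrow> real^'d) \<Rightarrow> (nat \<Rightarrow> 's) \<Rightarrow> nat \<Rightarrow> real
     \<Rightarrow> real^'d \<Rightarrow> nat \<Rightarrow> (real^'d) pmf" where
  "inner_dist r \<gamma> \<phi> traj N \<alpha> \<theta>t 0 = return_pmf \<theta>t"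
| "inner_dist r \<gamma> \<phi> traj N \<alpha> \<theta>t (Suc t) =
     bind_pmf (inner_dist r \<gamma> \<phi> traj N \<alpha> \<theta>t t) (\<lambda>\<theta>.
     bind_pmf (pmf_of_set {1..N}) (\<lambda>i. return_pmf (svrg_step r \<gamma> \<phi> traj N \<alpha> \<theta>t \<theta> i)))"

definition epoch :: "('s \<Rightarrow> 's \<Rightarrow> real) \<Rightarrow> real \<Rightarrow> ('s \<Rightarrow> real^'d) \<Rightarrow> (nat \<Rightarrow> 's) \<Rightarrow> nat \<Rightarrow> real \<Rightarrow> nat
     \<Rightarrow> real^'d \<Rightarrow> (real^'d) pmf" where
  "epoch r \<gamma> \<phi> traj N \<alpha> M \<theta>t =
     bind_pmf (pmf_of_set {0..<M}) (\<lambda>t'. inner_dist r \<gamma> \<phi> traj N \<alpha> \<theta>t t')"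

primrec td_svrg :: "('s \<Rightarrow> 's \<Rightarrow> real) \<Rightarrow> real \<Rightarrow> ('s \<Rightarrow> real^'d) \<Rightarrow> (nat \<Rightarrow> 's) \<Rightarrow> nat \<Rightarrow> real \<Rightarrow> nat
     \<Rightarrow> real^'d \<Rightarrow> nat \<Rightarrow> (real^'d) pmf" where
  "td_svrg r \<gamma> \<phi> traj N \<alpha> M \<theta>0 0 = return_pmf \<theta>0"
| "td_svrg r \<gamma> \<phi> traj N \<alpha> M \<theta>0 (Suc m) =
     bind_pmf (td_svrg r \<gamma> \<phi> traj N \<alpha> M \<theta>0 m) (epoch r \<gamma> \<phi> traj N \<alpha> M)"

end

theory Submission
  imports Defs
begin

lemma outer_mv: "outer u v *v x = (v \<bullet> x) *\<^sub>R (u::real^'d)"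
  by (simp add: vec_eq_iff outer_def matrix_vector_mult_def inner_vec_def sum_distrib_left mult_ac)

lemma mv_scale: "(c *\<^sub>R (A::real^'d^'d)) *v x = c *\<^sub>R (A *v x)"
  by (simp add: vec_eq_iff matrix_vector_mult_def sum_distrib_left mult_ac)

lemma mv_sum: "finite I \<Longrightarrow> (\<Sum>i\<in>I. (B i::real^'d^'d)) *v x = (\<Sum>i\<in>I. B i *v x)"
  by (induction I rule: finite_induct) (auto simp: matrix_vector_mult_add_rdistrib)

lemma Ad_mv: "A_d \<gamma> \<phi> traj N *v x = (1 / real N) *\<^sub>R (\<Sum>t=1..N. ((\<phi> (traj t) - \<gamma> *\<^sub>R \<phi> (traj (Suc t))) \<bullet> x) *\<^sub>R \<phi> (traj t))"
  unfolding A_d_def mv_scale by (simp add: mv_sum outer_mv)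

lemma gbar_eq: "gbar r \<gamma> \<phi> traj N \<theta> = b_d r \<phi> traj N - A_d \<gamma> \<phi> traj N *v \<theta>"
proof -
  have "tdg r \<gamma> \<phi> (traj t) (traj (Suc t)) \<theta> = r (traj t) (traj (Suc t)) *\<^sub>R \<phi> (traj t) - ((\<phi> (traj t) - \<gamma> *\<^sub>R \<phi> (traj (Suc t))) \<bullet> \<theta>) *\<^sub>R \<phi> (traj t)" for t
    by (simp add: tdg_def inner_diff_left algebra_simps)
  then show ?thesis
    unfolding gbar_def b_d_def Ad_mv by (simp add: sum_subtractf scaleR_diff_right)
qed

lemma sym_quad: "x \<bullet> (((1/2) *\<^sub>R (A + transpose A)) *v x) = x \<bullet> ((A::real^'d^'d) *v x)"
proof -
  have "x \<bullet> (transpose A *v x) = x \<bullet> (A *v x)"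
    by (simp add: dot_lmul_matrix[symmetric] inner_commute)
  then show ?thesis by (simp add: mv_scale matrix_vector_mult_add_rdistrib inner_add_right)
qed

lemma sym_swap: assumes "transpose S = S" shows "x \<bullet> ((S::real^'d^'d) *v y) = y \<bullet> (S *v x)"
proof -
  have "x \<bullet> (S *v y) = (x v* S) \<bullet> y" by (simp add: dot_lmul_matrix)
  also have "\<dots> = (transpose S *v x) \<bullet> y" by simp
  finally show ?thesis using assms by (simp add: inner_commute)
qed


lemma mv_scale_right: "(A::real^'d^'d) *v (c *\<^sub>R x) = c *\<^sub>R (A *v x)"
  by (simp add: vec_eq_iff matrix_vector_mult_def sum_distrib_left mult_ac)

lemma eig_finite:
  assumes sym: "transpose S = S"
  shows "finite {c. \<exists>v. v \<noteq> 0 \<and> (S::real^'d^'d) *v v = c *\<^sub>R v}" (is "finite ?E")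
proof -
  define w where "w c = (SOME v. v \<noteq> 0 \<and> S *v v = c *\<^sub>R v)" for c
  have w: "w c \<noteq> 0 \<and> S *v w c = c *\<^sub>R w c" if "c \<in> ?E" for c
    using that unfolding w_def mem_Collect_eq by (rule someI_ex)
  have inj: "inj_on w ?E"
  proof (rule inj_onI)
    fix c1 c2 assume h: "c1 \<in> ?E" "c2 \<in> ?E" "w c1 = w c2"
    then have "c1 *\<^sub>R w c1 = c2 *\<^sub>R w c1" using w[of c1] w[of c2] by metis
    then show "c1 = c2" using w[OF h(1)] by (simp add: scaleR_cancel_right)
  qed
  have orth: "pairwise orthogonal (w ` ?E)"
  proof (rule pairwiseI)
    fix a b assume hh: "a \<in> w ` ?E" "b \<in> w ` ?E" "a \<noteq> b"
    then obtain c1 c2 where h: "c1 \<in> ?E" "c2 \<in> ?E" "w c1 \<noteq> w c2" and ab: "a = w c1" "b = w c2" by auto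
    then have ne: "c1 \<noteq> c2" by auto
    have "w c1 \<bullet> (S *v w c2) = w c2 \<bullet> (S *v w c1)" using sym_swap[OF sym] by blast
    then have "c2 * (w c1 \<bullet> w c2) = c1 * (w c1 \<bullet> w c2)"
      using w[OF h(1)] w[OF h(2)] by (simp add: inner_commute)
    then have "w c1 \<bullet> w c2 = 0" using ne by simp
    then show "orthogonal a b" unfolding ab by (simp add: orthogonal_def)
  qed
  have "0 \<notin> w ` ?E" using w by force
  then have "independent (w ` ?E)" using pairwise_orthogonal_independent orth by blast
  then have "finite (w ` ?E)" using independent_bound by blast
  then show ?thesis using finite_imageD inj by blast
qed

lemma quad_min:
  fixes A :: "real^'d^'d"
  defines "S \<equiv> (1/2) *\<^sub>R (A + transpose A)"
  shows "\<exists>\<mu>. (\<exists>v. v \<noteq> 0 \<and> S *v v = \<mu> *\<^sub>R v) \<and> (\<forall>x. \<mu> * (norm x)\<^sup>2 \<le> x \<bullet> (A *v x))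
             \<and> (\<exists>x0. norm x0 = 1 \<and> \<mu> = x0 \<bullet> (A *v x0))"
proof -
  have symS: "transpose S = S" unfolding S_def
    by (simp add: vec_eq_iff transpose_def)
  define f where "f x = x \<bullet> (S *v x)" for x :: "real^'d"
  have fA: "f x = x \<bullet> (A *v x)" for x unfolding f_def S_def by (rule sym_quad)
  have cont: "continuous_on (sphere 0 1) f" unfolding f_def
    by (intro continuous_intros linear_continuous_on matrix_vector_mul_bounded_linear)
  have ne: "sphere (0::real^'d) 1 \<noteq> {}"
  proof -
    obtain i :: 'd where True by blast
    have "norm (axis i (1::real)) = 1" by simp
    then show ?thesis by force
  qed
  obtain x0 where x0: "x0 \<in> sphere 0 1" "\<And>y. y \<in> sphere 0 1 \<Longrightarrow> f x0 \<le> f y"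
    using continuous_attains_inf[OF compact_sphere ne cont] by blast
  define \<mu> where "\<mu> = f x0"
  have nx0: "norm x0 = 1" using x0 by simp
  have fscale: "f (c *\<^sub>R x) = c^2 * f x" for c x
    by (simp add: f_def mv_scale[symmetric] power2_eq_square matrix_vector_mult_def vec_eq_iff)
       (simp add: f_def inner_vec_def matrix_vector_mult_def sum_distrib_left mult_ac)
  have bound: "\<mu> * (norm x)\<^sup>2 \<le> f x" for x
  proof (cases "x = 0")
    case True then show ?thesis by (simp add: f_def)
  next
    case False
    have "f x0 \<le> f ((1/norm x) *\<^sub>R x)" using x0(2)[of "(1/norm x) *\<^sub>R x"] False by simp
    also have "\<dots> = f x / (norm x)^2" by (simp add: fscale power_divide)
    finally show ?thesis using False by (simp add: \<mu>_def field_simps)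
  qed
  define z where "z = S *v x0 - \<mu> *\<^sub>R x0"
  have g_exp: "f (x0 + t *\<^sub>R z) - \<mu> * (norm (x0 + t *\<^sub>R z))\<^sup>2 = 2 * t * (norm z)\<^sup>2 + t^2 * (f z - \<mu> * (norm z)\<^sup>2)" for t
  proof -
    have sw: "x0 \<bullet> (S *v z) = z \<bullet> (S *v x0)" using sym_swap[OF symS] by blast
    have h1: "f (x0 + t *\<^sub>R z) = f x0 + 2 * t * (z \<bullet> (S *v x0)) + t^2 * f z"
      unfolding f_def using sw
      by (simp add: matrix_vector_right_distrib inner_add_left inner_add_right
          mv_scale_right algebra_simps power2_eq_square)
    have h2: "(norm (x0 + t *\<^sub>R z))\<^sup>2 = 1 + 2 * t * (z \<bullet> x0) + t^2 * (norm z)\<^sup>2"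
    proof -
      have a: "x0 \<bullet> x0 = 1" using nx0 by (simp add: dot_square_norm)
      have b: "z \<bullet> z = (norm z)\<^sup>2" by (simp add: dot_square_norm)
      have "(norm (x0 + t *\<^sub>R z))\<^sup>2 = (x0 + t *\<^sub>R z) \<bullet> (x0 + t *\<^sub>R z)" by (simp add: dot_square_norm)
      also have "\<dots> = x0 \<bullet> x0 + 2 * t * (z \<bullet> x0) + t^2 * (z \<bullet> z)"
        by (simp add: inner_add_left inner_add_right algebra_simps power2_eq_square inner_commute)
      finally show ?thesis using a b by simp
    qed
    have h3: "(norm z)\<^sup>2 = z \<bullet> (S *v x0) - \<mu> * (z \<bullet> x0)"
      by (simp add: power2_norm_eq_inner z_def inner_diff_right)
    show ?thesis unfolding h1 h2 h3 by (simp add: \<mu>_def algebra_simps)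
  qed
  have z0: "z = 0"
  proof (rule ccontr)
    assume "z \<noteq> 0"
    then have zp: "(norm z)\<^sup>2 > 0" by simp
    define g where "g = f z - \<mu> * (norm z)\<^sup>2"
    have g0: "g \<ge> 0" using bound[of z] by (simp add: g_def)
    define t where "t = - (norm z)\<^sup>2 / (g + 1)"
    have tneg: "t < 0" using zp g0 by (simp add: t_def)
    have "t * g > - (norm z)\<^sup>2" using zp g0 by (simp add: t_def field_simps)
    then have "2 * (norm z)\<^sup>2 + t * g > 0" using zp by linarith
    then have "t * (2 * (norm z)\<^sup>2 + t * g) < 0" using tneg by (simp add: mult_neg_pos)
    moreover have "t * (2 * (norm z)\<^sup>2 + t * g) \<ge> 0"
      using g_exp[of t] bound[of "x0 + t *\<^sub>R z"] by (simp add: g_def algebra_simps power2_eq_square)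
    ultimately show False by simp
  qed
  have "x0 \<noteq> 0" using nx0 by auto
  moreover have "S *v x0 = \<mu> *\<^sub>R x0" using z0 by (simp add: z_def)
  ultimately show ?thesis using bound nx0 fA \<mu>_def by metis
qed


lemma step_avg:
  fixes p q :: "nat \<Rightarrow> real^'d" and Av :: "real^'d \<Rightarrow> real^'d" and e f :: "real^'d"
  assumes fin: "finite I" and ne: "I \<noteq> {}"
    and pb: "\<And>i. i \<in> I \<Longrightarrow> norm (p i) \<le> 1" and qb: "\<And>i. i \<in> I \<Longrightarrow> norm (q i) \<le> 2"
    and Av: "\<And>x. Av x = (1 / real (card I)) *\<^sub>R (\<Sum>i\<in>I. (q i \<bullet> x) *\<^sub>R p i)"
    and Lq: "\<And>x. L * (norm x)\<^sup>2 \<le> x \<bullet> Av x"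
    and a0: "0 \<le> \<alpha>"
  shows "(\<Sum>i\<in>I. (norm (e - \<alpha> *\<^sub>R ((q i \<bullet> (e - f)) *\<^sub>R p i + Av f)))\<^sup>2) / real (card I)
         \<le> (1 - 2 * \<alpha> * L + 12 * \<alpha>\<^sup>2) * (norm e)\<^sup>2 + 8 * \<alpha>\<^sup>2 * (norm f)\<^sup>2"
proof -
  define n where "n = real (card I)"
  have npos: "n > 0" using fin ne by (simp add: n_def card_gt_0_iff)
  define y where "y = e - f"
  define c where "c = Av f"
  define X where "X i = (q i \<bullet> y) *\<^sub>R p i" for i
  have SX: "(\<Sum>i\<in>I. X i) = n *\<^sub>R Av y" using npos by (simp add: Av X_def n_def)
  have lin: "Av y + c = Av e"
  proof -
    have "(\<Sum>i\<in>I. (q i \<bullet> e) *\<^sub>R p i) = (\<Sum>i\<in>I. (q i \<bullet> y) *\<^sub>R p i) + (\<Sum>i\<in>I. (q i \<bullet> f) *\<^sub>R p i)"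
      by (simp add: y_def inner_diff_right scaleR_diff_left sum_subtractf[symmetric] sum.distrib[symmetric])
    then show ?thesis by (simp add: c_def Av scaleR_add_right[symmetric])
  qed
  have Avb: "norm (Av x) \<le> 2 * norm x" for x
  proof -
    have "norm (\<Sum>i\<in>I. (q i \<bullet> x) *\<^sub>R p i) \<le> (\<Sum>i\<in>I. norm ((q i \<bullet> x) *\<^sub>R p i))" by (rule norm_sum)
    also have "\<dots> \<le> (\<Sum>i\<in>I. 2 * norm x)"
    proof (rule sum_mono)
      fix i assume i: "i \<in> I"
      have "norm ((q i \<bullet> x) *\<^sub>R p i) = \<bar>q i \<bullet> x\<bar> * norm (p i)" by simp
      also have "\<dots> \<le> \<bar>q i \<bullet> x\<bar>" using pb[OF i] by (simp add: mult_left_le)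
      also have "\<dots> \<le> norm (q i) * norm x" by (rule Cauchy_Schwarz_ineq2)
      also have "\<dots> \<le> 2 * norm x" using qb[OF i] by (simp add: mult_right_mono)
      finally show "norm ((q i \<bullet> x) *\<^sub>R p i) \<le> 2 * norm x" .
    qed
    also have "\<dots> = n * (2 * norm x)" by (simp add: n_def)
    finally have "norm (\<Sum>i\<in>I. (q i \<bullet> x) *\<^sub>R p i) \<le> n * (2 * norm x)" .
    then show ?thesis using npos by (simp add: Av n_def[symmetric] field_simps)
  qed
  have Xb: "(norm (X i))\<^sup>2 \<le> 4 * (norm y)\<^sup>2" if i: "i \<in> I" for i
  proof -
    have "norm (X i) = \<bar>q i \<bullet> y\<bar> * norm (p i)" by (simp add: X_def)
    also have "\<dots> \<le> \<bar>q i \<bullet> y\<bar>" using pb[OF i] by (simp add: mult_left_le)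
    also have "\<dots> \<le> norm (q i) * norm y" by (rule Cauchy_Schwarz_ineq2)
    also have "\<dots> \<le> 2 * norm y" using qb[OF i] by (simp add: mult_right_mono)
    finally have "norm (X i) \<le> 2 * norm y" .
    then have "(norm (X i))\<^sup>2 \<le> (2 * norm y)\<^sup>2" by (rule power_mono) simp
    then show ?thesis by (simp add: power_mult_distrib)
  qed
  have exp: "(norm (e - \<alpha> *\<^sub>R (X i + c)))\<^sup>2 = (norm e)\<^sup>2 - 2 * \<alpha> * (e \<bullet> X i + e \<bullet> c)
       + \<alpha>\<^sup>2 * ((norm (X i))\<^sup>2 + 2 * (X i \<bullet> c) + (norm c)\<^sup>2)" for i
    unfolding power2_norm_eq_inner by (simp add: inner_diff_left inner_diff_right inner_add_left inner_add_right
        inner_commute algebra_simps power2_eq_square)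
  have "(\<Sum>i\<in>I. (norm (e - \<alpha> *\<^sub>R ((q i \<bullet> (e - f)) *\<^sub>R p i + Av f)))\<^sup>2)
      = (\<Sum>i\<in>I. (norm (e - \<alpha> *\<^sub>R (X i + c)))\<^sup>2)" by (simp add: X_def y_def c_def)
  also have "\<dots> = n * (norm e)\<^sup>2 - 2 * \<alpha> * (e \<bullet> (\<Sum>i\<in>I. X i) + n * (e \<bullet> c))
       + \<alpha>\<^sup>2 * ((\<Sum>i\<in>I. (norm (X i))\<^sup>2) + 2 * ((\<Sum>i\<in>I. X i) \<bullet> c) + n * (norm c)\<^sup>2)"
    unfolding exp by (simp add: sum.distrib sum_subtractf sum_distrib_left inner_sum_right inner_sum_left n_def algebra_simps)
  also have "\<dots> = n * ((norm e)\<^sup>2 - 2 * \<alpha> * (e \<bullet> Av e)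
       + \<alpha>\<^sup>2 * ((\<Sum>i\<in>I. (norm (X i))\<^sup>2) / n + 2 * (Av y \<bullet> c) + (norm c)\<^sup>2))"
    unfolding SX lin[symmetric] using npos by (simp add: inner_add_right field_simps)
  finally have eq: "(\<Sum>i\<in>I. (norm (e - \<alpha> *\<^sub>R ((q i \<bullet> (e - f)) *\<^sub>R p i + Av f)))\<^sup>2) / n
      = (norm e)\<^sup>2 - 2 * \<alpha> * (e \<bullet> Av e) + \<alpha>\<^sup>2 * ((\<Sum>i\<in>I. (norm (X i))\<^sup>2) / n + 2 * (Av y \<bullet> c) + (norm c)\<^sup>2)"
    using npos by simp
  have t1: "2 * \<alpha> * L * (norm e)\<^sup>2 \<le> 2 * \<alpha> * (e \<bullet> Av e)"
    using Lq[of e] a0 by (metis mult.assoc mult_left_mono zero_le_numeral mult_nonneg_nonneg)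
  have t2: "(\<Sum>i\<in>I. (norm (X i))\<^sup>2) / n \<le> 4 * (norm y)\<^sup>2"
  proof -
    have "(\<Sum>i\<in>I. (norm (X i))\<^sup>2) \<le> (\<Sum>i\<in>I. 4 * (norm y)\<^sup>2)" by (rule sum_mono) (rule Xb)
    also have "\<dots> = n * (4 * (norm y)\<^sup>2)" by (simp add: n_def)
    finally show ?thesis using npos by (simp add: field_simps)
  qed
  have t3: "2 * (Av y \<bullet> c) + (norm c)\<^sup>2 \<le> 4 * (norm e)\<^sup>2"
  proof -
    have "(norm (Av e))\<^sup>2 = (norm (Av y))\<^sup>2 + 2 * (Av y \<bullet> c) + (norm c)\<^sup>2"
      unfolding lin[symmetric] power2_norm_eq_inner by (simp add: inner_add_left inner_add_right inner_commute)
    moreover have "(norm (Av e))\<^sup>2 \<le> (2 * norm e)\<^sup>2" using Avb[of e] by (intro power_mono) simp_all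
    moreover have "0 \<le> (norm (Av y))\<^sup>2" by simp
    moreover have "(2 * norm e)\<^sup>2 = 4 * (norm e)\<^sup>2" by (simp add: power_mult_distrib)
    ultimately show ?thesis by linarith
  qed
  have t4: "(norm y)\<^sup>2 \<le> 2 * (norm e)\<^sup>2 + 2 * (norm f)\<^sup>2"
  proof -
    have "(norm y)\<^sup>2 \<le> (norm e + norm f)\<^sup>2" unfolding y_def by (simp add: power_mono norm_triangle_ineq4)
    also have "\<dots> \<le> 2 * (norm e)\<^sup>2 + 2 * (norm f)\<^sup>2" by (simp add: power2_sum) (smt (verit) sum_squares_bound)
    finally show ?thesis .
  qed
  have "\<alpha>\<^sup>2 * ((\<Sum>i\<in>I. (norm (X i))\<^sup>2) / n + 2 * (Av y \<bullet> c) + (norm c)\<^sup>2)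
        \<le> \<alpha>\<^sup>2 * (4 * (2 * (norm e)\<^sup>2 + 2 * (norm f)\<^sup>2) + 4 * (norm e)\<^sup>2)"
    using t2 t3 t4 by (intro mult_left_mono) auto
  then show ?thesis unfolding n_def[symmetric] eq using t1 by (simp add: algebra_simps)
qed


lemma inv_right: "invertible (A::real^'d^'d) \<Longrightarrow> A ** matrix_inv A = mat 1"
  unfolding invertible_def matrix_inv_def by (rule someI_ex[THEN conjunct1])

lemma E_bind:
  fixes h :: "'b \<Rightarrow> real"
  assumes "finite (set_pmf p)" "\<And>x. x \<in> set_pmf p \<Longrightarrow> finite (set_pmf (f x))"
  shows "measure_pmf.expectation (bind_pmf p f) h = measure_pmf.expectation p (\<lambda>x. measure_pmf.expectation (f x) h)"
  using assms by (subst pmf_expectation_bind[of "set_pmf p"], simp_all, subst integral_measure_pmf[of "set_pmf p"]) auto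

lemma E_mono:
  fixes f g :: "'a \<Rightarrow> real"
  assumes "finite (set_pmf p)" "\<And>x. x \<in> set_pmf p \<Longrightarrow> f x \<le> g x"
  shows "measure_pmf.expectation p f \<le> measure_pmf.expectation p g"
  using assms by (intro integral_mono_AE) (auto simp: integrable_measure_pmf_finite AE_measure_pmf_iff)

lemma E_affine:
  fixes f :: "'a \<Rightarrow> real"
  assumes "finite (set_pmf p)"
  shows "measure_pmf.expectation p (\<lambda>x. a * f x + b) = a * measure_pmf.expectation p f + b"
  using assms by (simp add: integrable_measure_pmf_finite)

lemma fin_inner: "N \<ge> 1 \<Longrightarrow> finite (set_pmf (inner_dist r \<gamma> \<phi> traj N \<alpha> \<theta>t t))"
  by (induction t) auto

lemma fin_epoch: "N \<ge> 1 \<Longrightarrow> M \<ge> 1 \<Longrightarrow> finite (set_pmf (epoch r \<gamma> \<phi> traj N \<alpha> M \<theta>t))"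
  unfolding epoch_def using fin_inner by auto

lemma fin_td: "N \<ge> 1 \<Longrightarrow> M \<ge> 1 \<Longrightarrow> finite (set_pmf (td_svrg r \<gamma> \<phi> traj N \<alpha> M \<theta>0 m))"
  by (induction m) (auto simp: fin_epoch)

lemma tdg_diff: "tdg r \<gamma> \<phi> s s' \<theta> - tdg r \<gamma> \<phi> s s' \<theta>' = - (((\<phi> s - \<gamma> *\<^sub>R \<phi> s') \<bullet> (\<theta> - \<theta>')) *\<^sub>R \<phi> s)"
  by (simp add: tdg_def inner_diff_left inner_diff_right algebra_simps)


theorem proposition1:
  fixes r :: "'s::finite \<Rightarrow> 's \<Rightarrow> real"
    and \<phi> :: "'s \<Rightarrow> real^'d"
    and \<gamma> :: real
    and traj :: "nat \<Rightarrow> 's"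
    and N M :: nat
    and \<theta>0 :: "real^'d"
    and m :: nat
  assumes phi_bound: "\<And>s. norm (\<phi> s) \<le> 1"
    and gamma: "0 \<le> \<gamma>" "\<gamma> < 1"
    and N_pos: "N \<ge> 1"
    and inv: "invertible (A_d \<gamma> \<phi> traj N)"
    and lam_pos: "min_eig ((1/2) *\<^sub>R (A_d \<gamma> \<phi> traj N + transpose (A_d \<gamma> \<phi> traj N))) > 0"
    and M_def: "real M = 32 / (min_eig ((1/2) *\<^sub>R (A_d \<gamma> \<phi> traj N + transpose (A_d \<gamma> \<phi> traj N))))\<^sup>2"
  shows "measure_pmf.expectation
           (td_svrg r \<gamma> \<phi> traj N
              (min_eig ((1/2) *\<^sub>R (A_d \<gamma> \<phi> traj N + transpose (A_d \<gamma> \<phi> traj N))) / 32) M \<theta>0 m)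
           (\<lambda>\<theta>. (norm (\<theta> - matrix_inv (A_d \<gamma> \<phi> traj N) *v b_d r \<phi> traj N))\<^sup>2)
         \<le> (5/7) ^ m * (norm (\<theta>0 - matrix_inv (A_d \<gamma> \<phi> traj N) *v b_d r \<phi> traj N))\<^sup>2"
proof -
  define Ad where "Ad = A_d \<gamma> \<phi> traj N"
  define S where "S = (1/2) *\<^sub>R (Ad + transpose Ad)"
  define L where "L = min_eig S"
  define ts where "ts = matrix_inv Ad *v b_d r \<phi> traj N"
  define F where "F \<theta> = (norm (\<theta> - ts))\<^sup>2" for \<theta>
  define \<alpha> where "\<alpha> = L / 32"
  define p where "p t = \<phi> (traj t)" for t
  define q where "q t = \<phi> (traj t) - \<gamma> *\<^sub>R \<phi> (traj (Suc t))" for t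
  have Lpos: "L > 0" using lam_pos by (simp add: L_def S_def Ad_def)
  have Mreal: "real M = 32 / L\<^sup>2" using M_def by (simp add: L_def S_def Ad_def)
  have M1: "M \<ge> 1"
  proof -
    have "real M > 0" using Mreal Lpos by simp
    then show ?thesis by linarith
  qed
  have qb: "norm (q t) \<le> 2" for t
  proof -
    have "norm (q t) \<le> norm (\<phi> (traj t)) + norm (\<gamma> *\<^sub>R \<phi> (traj (Suc t)))" unfolding q_def by (rule norm_triangle_ineq4)
    also have "\<dots> \<le> 1 + 1 * 1" using phi_bound[of "traj t"] phi_bound[of "traj (Suc t)"] gamma
      by (intro add_mono) (auto intro!: mult_le_one)
    finally show ?thesis by simp
  qed
  have pb: "norm (p t) \<le> 1" for t using phi_bound by (simp add: p_def)
  have Av: "Ad *v x = (1 / real (card {1..N})) *\<^sub>R (\<Sum>i\<in>{1..N}. (q i \<bullet> x) *\<^sub>R p i)" for x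
    unfolding Ad_def Ad_mv by (simp add: p_def q_def)
  obtain \<mu> x0 where mu: "\<exists>v. v \<noteq> 0 \<and> S *v v = \<mu> *\<^sub>R v" "\<And>x. \<mu> * (norm x)\<^sup>2 \<le> x \<bullet> (Ad *v x)"
    and x0: "norm x0 = 1" "\<mu> = x0 \<bullet> (Ad *v x0)"
    using quad_min[of Ad] unfolding S_def by blast
  have symS: "transpose S = S" unfolding S_def by (simp add: vec_eq_iff transpose_def)
  have Lmu: "L \<le> \<mu>" unfolding L_def min_eig_def
    using eig_finite[OF symS] mu(1) by (intro Min_le) auto
  have Lq: "L * (norm x)\<^sup>2 \<le> x \<bullet> (Ad *v x)" for x
    using mu(2)[of x] Lmu by (smt (verit) mult_right_mono zero_le_power2)
  have Adb: "norm (Ad *v x) \<le> 2 * norm x" for x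
  proof -
    have "norm (\<Sum>i\<in>{1..N}. (q i \<bullet> x) *\<^sub>R p i) \<le> (\<Sum>i\<in>{1..N}. norm ((q i \<bullet> x) *\<^sub>R p i))" by (rule norm_sum)
    also have "\<dots> \<le> (\<Sum>i\<in>{1..N}. 2 * norm x)"
    proof (rule sum_mono)
      fix i
      have "norm ((q i \<bullet> x) *\<^sub>R p i) = \<bar>q i \<bullet> x\<bar> * norm (p i)" by simp
      also have "\<dots> \<le> \<bar>q i \<bullet> x\<bar>" using pb[of i] by (simp add: mult_left_le)
      also have "\<dots> \<le> norm (q i) * norm x" by (rule Cauchy_Schwarz_ineq2)
      also have "\<dots> \<le> 2 * norm x" using qb[of i] by (simp add: mult_right_mono)
      finally show "norm ((q i \<bullet> x) *\<^sub>R p i) \<le> 2 * norm x" .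
    qed
    also have "\<dots> = real N * (2 * norm x)" by simp
    finally have "norm (\<Sum>i\<in>{1..N}. (q i \<bullet> x) *\<^sub>R p i) \<le> real N * (2 * norm x)" .
    then show ?thesis using N_pos by (simp add: Av field_simps)
  qed
  have L2: "L \<le> 2"
  proof -
    have "\<mu> \<le> norm x0 * norm (Ad *v x0)" unfolding x0(2) by (rule norm_cauchy_schwarz)
    also have "\<dots> \<le> 2" using Adb[of x0] x0(1) by simp
    finally show ?thesis using Lmu by simp
  qed
  have Ats: "Ad *v ts = b_d r \<phi> traj N"
    unfolding ts_def matrix_vector_mul_assoc inv_right[OF inv[folded Ad_def]] by simp
  define c where "c = 13 * L\<^sup>2 / 256"
  have c_pos: "c > 0" using Lpos by (simp add: c_def)
  have c_le: "c \<le> 1"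
  proof -
    have "L\<^sup>2 \<le> 2\<^sup>2" using L2 Lpos by (intro power_mono) auto
    then show ?thesis by (simp add: c_def)
  qed
  have coef: "1 - 2 * \<alpha> * L + 12 * \<alpha>\<^sup>2 = 1 - c" "8 * \<alpha>\<^sup>2 = (2/13) * c"
    by (simp_all add: \<alpha>_def c_def power2_eq_square field_simps)
  have step: "measure_pmf.expectation (pmf_of_set {1..N}) (\<lambda>i. F (svrg_step r \<gamma> \<phi> traj N \<alpha> \<theta>t \<theta> i))
      \<le> (1 - c) * F \<theta> + (2/13) * c * F \<theta>t" for \<theta>t \<theta>
  proof -
    have eq: "svrg_step r \<gamma> \<phi> traj N \<alpha> \<theta>t \<theta> i - ts
        = (\<theta> - ts) - \<alpha> *\<^sub>R ((q i \<bullet> ((\<theta> - ts) - (\<theta>t - ts))) *\<^sub>R p i + Ad *v (\<theta>t - ts))" for i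
    proof -
      have g: "gbar r \<gamma> \<phi> traj N \<theta>t = - (Ad *v (\<theta>t - ts))"
        unfolding gbar_eq Ad_def[symmetric] Ats[symmetric] by (simp add: matrix_vector_mult_diff_distrib)
      have dd: "(\<theta> - ts) - (\<theta>t - ts) = \<theta> - \<theta>t" by simp
      show ?thesis unfolding svrg_step_def tdg_diff g dd p_def q_def
        by (simp add: scaleR_add_right scaleR_minus_right scaleR_diff_right)
    qed
    have "measure_pmf.expectation (pmf_of_set {1..N}) (\<lambda>i. F (svrg_step r \<gamma> \<phi> traj N \<alpha> \<theta>t \<theta> i))
       = (\<Sum>i\<in>{1..N}. (norm ((\<theta> - ts) - \<alpha> *\<^sub>R ((q i \<bullet> ((\<theta> - ts) - (\<theta>t - ts))) *\<^sub>R p i + Ad *v (\<theta>t - ts))))\<^sup>2) / real (card {1..N})"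
      using N_pos by (simp add: integral_pmf_of_set F_def eq)
    also have "\<dots> \<le> (1 - 2 * \<alpha> * L + 12 * \<alpha>\<^sup>2) * (norm (\<theta> - ts))\<^sup>2 + 8 * \<alpha>\<^sup>2 * (norm (\<theta>t - ts))\<^sup>2"
      by (rule step_avg[where Av = "\<lambda>x. Ad *v x", OF _ _ pb qb Av Lq]) (use N_pos Lpos in \<open>auto simp: \<alpha>_def\<close>)
    finally show ?thesis unfolding coef F_def by simp
  qed
  have finI: "finite (set_pmf (inner_dist r \<gamma> \<phi> traj N \<alpha> \<theta>t t))" for \<theta>t t using fin_inner N_pos by blast
  have c1: "0 \<le> 1 - c" using c_le by simp
  have inner: "measure_pmf.expectation (inner_dist r \<gamma> \<phi> traj N \<alpha> \<theta>t t) F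
      \<le> (2/13) * F \<theta>t + (11/13) * (1 - c)^t * F \<theta>t" for \<theta>t t
  proof (induction t)
    case 0
    then show ?case by simp
  next
    case (Suc t)
    have "measure_pmf.expectation (inner_dist r \<gamma> \<phi> traj N \<alpha> \<theta>t (Suc t)) F
        = measure_pmf.expectation (inner_dist r \<gamma> \<phi> traj N \<alpha> \<theta>t t)
            (\<lambda>\<theta>. measure_pmf.expectation (pmf_of_set {1..N}) (\<lambda>i. F (svrg_step r \<gamma> \<phi> traj N \<alpha> \<theta>t \<theta> i)))"
      using N_pos by (simp add: E_bind finI)
    also have "\<dots> \<le> measure_pmf.expectation (inner_dist r \<gamma> \<phi> traj N \<alpha> \<theta>t t)
            (\<lambda>\<theta>. (1 - c) * F \<theta> + (2/13) * c * F \<theta>t)"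
      by (rule E_mono[OF finI step])
    also have "\<dots> = (1 - c) * measure_pmf.expectation (inner_dist r \<gamma> \<phi> traj N \<alpha> \<theta>t t) F + (2/13) * c * F \<theta>t"
      by (rule E_affine[OF finI])
    also have "\<dots> \<le> (1 - c) * ((2/13) * F \<theta>t + (11/13) * (1 - c)^t * F \<theta>t) + (2/13) * c * F \<theta>t"
      using Suc.IH c1 by (simp add: mult_left_mono)
    also have "\<dots> = (2/13) * F \<theta>t + (11/13) * (1 - c)^(Suc t) * F \<theta>t"
      by (simp only: power_Suc) (simp add: field_simps)
    finally show ?case .
  qed
  have gs: "(\<Sum>t<M. (1 - c)^t) \<le> 1 / c"
  proof -
    have "(\<Sum>t<M. (1 - c)^t) = (1 - (1 - c)^M) / c" using c_pos by (simp add: sum_gp_strict)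
    also have "\<dots> \<le> 1 / c" using c_pos c1 by (simp add: divide_right_mono)
    finally show ?thesis .
  qed
  have cM: "c * real M = 13 / 8" using Lpos by (simp add: c_def Mreal field_simps power2_eq_square)
  have ep: "measure_pmf.expectation (epoch r \<gamma> \<phi> traj N \<alpha> M \<theta>t) F \<le> 5/7 * F \<theta>t" for \<theta>t
  proof -
    have u0: "F \<theta>t \<ge> 0" by (simp add: F_def)
    have "measure_pmf.expectation (epoch r \<gamma> \<phi> traj N \<alpha> M \<theta>t) F
        = (\<Sum>t\<in>{0..<M}. measure_pmf.expectation (inner_dist r \<gamma> \<phi> traj N \<alpha> \<theta>t t) F) / real M"
      unfolding epoch_def using M1 by (simp add: E_bind finI integral_pmf_of_set)
    also have "\<dots> \<le> (\<Sum>t\<in>{0..<M}. (2/13) * F \<theta>t + (11/13) * (1 - c)^t * F \<theta>t) / real M"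
      by (intro divide_right_mono sum_mono inner) simp
    also have "\<dots> = (2/13) * F \<theta>t + (11/13) * F \<theta>t * (\<Sum>t<M. (1 - c)^t) / real M"
    proof -
      have "(\<Sum>t\<in>{0..<M}. (2/13) * F \<theta>t + (11/13) * (1 - c)^t * F \<theta>t)
          = real M * ((2/13) * F \<theta>t) + ((11/13) * F \<theta>t) * (\<Sum>t<M. (1 - c)^t)"
        by (simp add: sum.distrib sum_distrib_left atLeast0LessThan mult_ac)
      then show ?thesis using M1 by (simp add: add_divide_distrib)
    qed
    also have "\<dots> \<le> (2/13) * F \<theta>t + (11/13) * F \<theta>t * (1 / c) / real M"
      using gs u0 M1 by (intro add_left_mono divide_right_mono mult_left_mono) auto
    also have "\<dots> = (2/13) * F \<theta>t + (11/13) * F \<theta>t / (c * real M)" by simp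
    also have "\<dots> = (114/169) * F \<theta>t" unfolding cM by simp
    also have "\<dots> \<le> 5/7 * F \<theta>t" using u0 by simp
    finally show ?thesis .
  qed
  have main: "measure_pmf.expectation (td_svrg r \<gamma> \<phi> traj N \<alpha> M \<theta>0 m) F \<le> (5/7)^m * F \<theta>0"
  proof (induction m)
    case 0 then show ?case by simp
  next
    case (Suc m)
    have finT: "finite (set_pmf (td_svrg r \<gamma> \<phi> traj N \<alpha> M \<theta>0 m))" using fin_td N_pos M1 by blast
    have "measure_pmf.expectation (td_svrg r \<gamma> \<phi> traj N \<alpha> M \<theta>0 (Suc m)) F
        = measure_pmf.expectation (td_svrg r \<gamma> \<phi> traj N \<alpha> M \<theta>0 m) (\<lambda>\<theta>t. measure_pmf.expectation (epoch r \<gamma> \<phi> traj N \<alpha> M \<theta>t) F)"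
      unfolding td_svrg.simps by (rule E_bind[OF finT fin_epoch[OF N_pos M1]])
    also have "\<dots> \<le> measure_pmf.expectation (td_svrg r \<gamma> \<phi> traj N \<alpha> M \<theta>0 m) (\<lambda>\<theta>t. 5/7 * F \<theta>t + 0)"
      using ep by (intro E_mono[OF finT]) simp
    also have "\<dots> = 5/7 * measure_pmf.expectation (td_svrg r \<gamma> \<phi> traj N \<alpha> M \<theta>0 m) F"
      using E_affine[OF finT] by simp
    also have "\<dots> \<le> 5/7 * ((5/7)^m * F \<theta>0)" using Suc.IH by simp
    finally show ?case by simp
  qed
  then show ?thesis unfolding F_def[abs_def] ts_def \<alpha>_def L_def S_def Ad_def .
qed

end
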